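(* Let $G$ be a compact Hausdorff abelian group with Haar probability measure $\mu$, and let $B$ be a $K$-analytic subset of $G$. Then for all non-negative integers $m,n$ we have \[\mu(mB-nB)=\sup_{D\subset B,\ D\text{ compact}}\mu(mD-nD).\]
   Context: A subset $S$ of a topological space $Y$ is a $K_{\sigma\delta}$ set if $S=\bigcap_{i\in\mathbb{N}}\bigcup_{j\in\mathbb{N}}K_{i,j}$ for compact sets $K_{i,j}\subset Y$. A subset $A$ of a Hausdorff space $X$ is $K$-analytic if there is a $K_{\sigma\delta}$ set $S$ in some Hausdorff space and a continuous map $f:S\to X$ with $A=f(S)$ ($K$-analytic subsets of $G$ are Haar measurable, and sums/differences of $K$-analytic sets are $K$-analytic). $mB-nB=\{b_1+\dots+b_m-b_1'-\dots-b_n':b_i,b_j'\in B\}$, with an empty sum equal to $0$. *)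

theory Defs
  imports "HOL-Probability.Probability"
begin

text \<open>Haar probability measure on a compact Hausdorff abelian group (the type 'a with its
  topology): a translation-invariant Radon (outer regular on Borel sets, inner regular by
  compacts on open sets) Borel probability measure.\<close>
definition haar_prob :: "('a::{topological_ab_group_add, t2_space}) measure \<Rightarrow> bool" where
  "haar_prob M \<longleftrightarrow>
     space M = UNIV \<and> sets M = sets borel \<and> prob_space M \<and>
     (\<forall>A \<in> sets borel. \<forall>x. emeasure M ((\<lambda>y. x + y) ` A) = emeasure M A) \<and>
     (\<forall>A \<in> sets borel. emeasure M A = (INF U \<in> {U. open U \<and> A \<subseteq> U}. emeasure M U)) \<and>
     (\<forall>U. open U \<longrightarrow> emeasure M U = (SUP K \<in> {K. compact K \<and> K \<subseteq> U}. emeasure M K))"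

definition Ksd_set :: "'b topology \<Rightarrow> 'b set \<Rightarrow> bool" where
  "Ksd_set Y S \<longleftrightarrow> (\<exists>K :: nat \<Rightarrow> nat \<Rightarrow> 'b set.
      (\<forall>i j. compactin Y (K i j)) \<and> S = (\<Inter>i. \<Union>j. K i j))"

definition K_analytic_via :: "'b topology \<Rightarrow> ('a::topological_space) set \<Rightarrow> bool" where
  "K_analytic_via Y A \<longleftrightarrow> Hausdorff_space Y \<and> (\<exists>S f.
      Ksd_set Y S \<and> continuous_map (subtopology Y S) euclidean f \<and> f ` S = A)"

definition sumset :: "nat \<Rightarrow> ('a::comm_monoid_add) set \<Rightarrow> 'a set" where
  "sumset m B = {(\<Sum>i<m. b i) | b. \<forall>i<m. b i \<in> B}"

definition diffset :: "nat \<Rightarrow> nat \<Rightarrow> ('a::ab_group_add) set \<Rightarrow> 'a set" where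
  "diffset m n B = {x - y | x y. x \<in> sumset m B \<and> y \<in> sumset n B}"

end

theory Submission imports Defs begin

lemma cm_add:
  fixes f g :: "'x \<Rightarrow> 'a::topological_monoid_add"
  shows "continuous_map X euclidean f \<Longrightarrow> continuous_map X euclidean g \<Longrightarrow> continuous_map X euclidean (\<lambda>x. f x + g x)"
  by (simp add: continuous_map_atin tendsto_add)

lemma cm_diff:
  fixes f g :: "'x \<Rightarrow> 'a::topological_group_add"
  shows "continuous_map X euclidean f \<Longrightarrow> continuous_map X euclidean g \<Longrightarrow> continuous_map X euclidean (\<lambda>x. f x - g x)"
  by (simp add: continuous_map_atin tendsto_diff)

lemma cm_sum:
  fixes f :: "'x \<Rightarrow> 'i \<Rightarrow> 'a::topological_comm_monoid_add"
  shows "finite I \<Longrightarrow> (\<And>i. i \<in> I \<Longrightarrow> continuous_map X euclidean (\<lambda>x. f x i)) \<Longrightarrow> continuous_map X euclidean (\<lambda>x. sum (f x) I)"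
  by (simp add: continuous_map_atin tendsto_sum)

definition dsum :: "nat \<Rightarrow> nat \<Rightarrow> (nat \<Rightarrow> 'a::ab_group_add) \<Rightarrow> 'a" where
  "dsum m n x = (\<Sum>i<m. x i) - (\<Sum>i<n. x (m+i))"

lemma dsum_cong: "(\<And>l. l < m+n \<Longrightarrow> x l = y l) \<Longrightarrow> dsum m n x = dsum m n y"
  unfolding dsum_def by (intro arg_cong2[where f="(-)"] sum.cong) auto

lemma sumset_memI: "(\<And>i. i<m \<Longrightarrow> b i \<in> X) \<Longrightarrow> (\<Sum>i<m. b i) \<in> sumset m X"
  unfolding sumset_def by blast

lemma diffset_memI: "x \<in> sumset m X \<Longrightarrow> y \<in> sumset n X \<Longrightarrow> x - y \<in> diffset m n X"
  unfolding diffset_def by blast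

lemma diffset_eq: "diffset m n X = dsum m n ` PiE {..<m+n} (\<lambda>_. X)"
proof
  show "diffset m n X \<subseteq> dsum m n ` PiE {..<m+n} (\<lambda>_. X)"
  proof
    fix z assume "z \<in> diffset m n X"
    then obtain x y where x: "x \<in> sumset m X" and y: "y \<in> sumset n X" and z0: "z = x - y"
      unfolding diffset_def by blast
    obtain b where b: "\<forall>i<m. b i \<in> X" and bx: "x = (\<Sum>i<m. b i)" using x unfolding sumset_def by blast
    obtain b' where b': "\<forall>i<n. b' i \<in> X" and by': "y = (\<Sum>i<n. b' i)" using y unfolding sumset_def by blast
    have z: "z = (\<Sum>i<m. b i) - (\<Sum>i<n. b' i)" using z0 bx by' by simp
    define w where "w = restrict (\<lambda>l. if l < m then b l else b' (l - m)) {..<m+n}"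
    have "w \<in> PiE {..<m+n} (\<lambda>_. X)" using b b' unfolding w_def by (auto simp: PiE_iff)
    moreover have "dsum m n w = z" unfolding z dsum_def w_def
      by (intro arg_cong2[where f="(-)"] sum.cong) auto
    ultimately show "z \<in> dsum m n ` PiE {..<m+n} (\<lambda>_. X)" by (metis image_eqI)
  qed
next
  show "dsum m n ` PiE {..<m+n} (\<lambda>_. X) \<subseteq> diffset m n X"
  proof
    fix z assume "z \<in> dsum m n ` PiE {..<m+n} (\<lambda>_. X)"
    then obtain w where w: "w \<in> PiE {..<m+n} (\<lambda>_. X)" and z: "z = dsum m n w" by (metis imageE)
    have "(\<Sum>i<m. w i) \<in> sumset m X" by (intro sumset_memI PiE_mem[OF w]) simp
    moreover have "(\<Sum>i<n. w (m+i)) \<in> sumset n X" by (intro sumset_memI PiE_mem[OF w]) simp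
    ultimately show "z \<in> diffset m n X" unfolding z dsum_def by (rule diffset_memI)
  qed
qed

lemma cm_dsum:
  fixes g :: "'x \<Rightarrow> nat \<Rightarrow> 'a::topological_ab_group_add"
  assumes "\<And>l. l < m+n \<Longrightarrow> continuous_map X euclidean (\<lambda>x. g x l)"
  shows "continuous_map X euclidean (\<lambda>x. dsum m n (g x))"
proof -
  have 1: "continuous_map X euclidean (\<lambda>x. \<Sum>i<m. g x i)"
    by (rule cm_sum) (use assms in auto)
  have 2: "continuous_map X euclidean (\<lambda>x. \<Sum>i<n. g x (m+i))"
    by (rule cm_sum) (use assms in auto)
  show ?thesis unfolding dsum_def by (rule cm_diff[OF 1 2])
qed

lemma compact_diffset:
  fixes D :: "'a::{topological_ab_group_add} set"
  assumes "compact D"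
  shows "compact (diffset m n D)"
proof -
  define Z :: "(nat \<Rightarrow> 'a) topology" where "Z = product_topology (\<lambda>_. euclidean) {..<m+n}"
  have "compactin Z (PiE {..<m+n} (\<lambda>_. D))"
    unfolding Z_def compactin_PiE using assms by simp
  moreover have "continuous_map Z euclidean (dsum m n)"
  proof -
    have P: "continuous_map Z euclidean (\<lambda>x. x l)" if "l<m+n" for l
      using continuous_map_product_projection[of l "{..<m+n}" "\<lambda>_. euclidean"] that
      unfolding Z_def by simp
    have "continuous_map Z euclidean (\<lambda>x. dsum m n ((\<lambda>x. x) x))"
      by (rule cm_dsum[where g="\<lambda>x. x"]) (rule P)
    then show ?thesis by simp
  qed
  ultimately have "compactin euclidean (dsum m n ` PiE {..<m+n} (\<lambda>_. D))"
    by (rule image_compactin)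
  then show ?thesis unfolding diffset_eq by simp
qed

lemma capac:
  fixes F :: "'b \<Rightarrow> 'a::t2_space" and \<mu> :: "'a measure"
  assumes HZ: "Hausdorff_space Z"
    and Ccpt: "\<And>(i::nat) (j::nat). compactin Z (C i j)"
    and Cinc: "\<And>i j. C i j \<subseteq> C i (Suc j)"
    and T: "T = (\<Inter>i. \<Union>j. C i j)"
    and Fc: "continuous_map (subtopology Z T) euclidean F"
    and sp: "sets \<mu> = sets borel"
    and outer: "\<And>A. A \<in> sets borel \<Longrightarrow> emeasure \<mu> A = (INF U \<in> {U. open U \<and> A \<subseteq> U}. emeasure \<mu> U)"
    and r: "r < outer_measure_of \<mu> (F ` T)"
  shows "\<exists>L. compactin Z L \<and> L \<subseteq> T \<and> r \<le> emeasure \<mu> (F ` L)"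
proof -
  have spU: "space \<mu> = UNIV" using sets_eq_imp_space_eq[OF sp] by simp
  have TZ: "T \<subseteq> topspace Z"
  proof
    fix x assume "x \<in> T"
    then obtain j where "x \<in> C 0 j" unfolding T by blast
    then show "x \<in> topspace Z" using compactin_subset_topspace[OF Ccpt[of 0 j]] by blast
  qed
  define P where "P k M \<longleftrightarrow> (k = 0 \<longrightarrow> M = topspace Z) \<and> (0 < k \<longrightarrow> compactin Z M) \<and>
      M \<subseteq> topspace Z \<and> r < outer_measure_of \<mu> (F ` (T \<inter> M))" for k :: nat and M
  define Q where "Q k M M' \<longleftrightarrow> M' \<subseteq> M \<and> (\<exists>j. M' \<subseteq> C k j)" for k :: nat and M M' :: "'b set"
  have Pcl: "closedin Z M" if "P k M" for k M
  proof (cases "k = 0")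
    case True then show ?thesis using that unfolding P_def by simp
  next
    case False
    then have "compactin Z M" using that unfolding P_def by (simp add: gr0_conv_Suc)
    then show ?thesis using HZ compactin_imp_closedin by blast
  qed
  have ex: "\<exists>M. P 0 M"
  proof
    have "T \<inter> topspace Z = T" using TZ by blast
    then show "P 0 (topspace Z)" unfolding P_def using r by simp
  qed
  have step: "\<exists>M'. P (Suc k) M' \<and> Q k M M'" if PM: "P k M" for k M
  proof -
    have eqU: "T \<inter> M = (\<Union>j. T \<inter> M \<inter> C k j)"
    proof
      show "T \<inter> M \<subseteq> (\<Union>j. T \<inter> M \<inter> C k j)"
      proof
        fix x assume x: "x \<in> T \<inter> M"
        then have "x \<in> (\<Union>j. C k j)" unfolding T by blast
        then obtain j where "x \<in> C k j" by blast
        then show "x \<in> (\<Union>j. T \<inter> M \<inter> C k j)" using x by blast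
      qed
    qed blast
    have inc: "incseq (\<lambda>j. F ` (T \<inter> M \<inter> C k j))"
      by (rule incseq_SucI) (use Cinc in blast)
    have "F ` (T \<inter> M) = F ` (\<Union>j. T \<inter> M \<inter> C k j)"
      by (rule arg_cong[OF eqU])
    also have "\<dots> = (\<Union>j. F ` (T \<inter> M \<inter> C k j))" by (rule image_UN)
    finally have "F ` (T \<inter> M) = (\<Union>j. F ` (T \<inter> M \<inter> C k j))" .
    then have "outer_measure_of \<mu> (F ` (T \<inter> M)) = (SUP j. outer_measure_of \<mu> (F ` (T \<inter> M \<inter> C k j)))"
      using SUP_outer_measure_of_incseq[OF _ inc, of \<mu>] spU by simp
    with PM have "r < (SUP j. outer_measure_of \<mu> (F ` (T \<inter> M \<inter> C k j)))"
      unfolding P_def by simp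
    then obtain j where j: "r < outer_measure_of \<mu> (F ` (T \<inter> M \<inter> C k j))"
      by (auto simp: less_SUP_iff)
    define M' where "M' = C k j \<inter> M"
    have "compactin Z M'" unfolding M'_def by (rule compact_Int_closedin[OF Ccpt Pcl[OF PM]])
    moreover have "T \<inter> M' = T \<inter> M \<inter> C k j" unfolding M'_def by blast
    moreover have "M' \<subseteq> topspace Z" using PM unfolding P_def M'_def by blast
    ultimately have "P (Suc k) M'" unfolding P_def using j by simp
    moreover have "Q k M M'" unfolding Q_def M'_def by blast
    ultimately show ?thesis by blast
  qed
  obtain Ms where Ms: "\<And>n. P n (Ms n)" "\<And>n. Q n (Ms n) (Ms (Suc n))"
    using dependent_nat_choice[of P Q, OF ex step] by blast
  have dec: "decseq Ms" by (rule decseq_SucI) (use Ms(2) in \<open>simp add: Q_def\<close>)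
  have Mscl: "closedin Z (Ms k)" for k using Pcl[OF Ms(1)] .
  have MsC: "\<exists>j. Ms (Suc k) \<subseteq> C k j" for k using Ms(2)[of k] unfolding Q_def by blast
  define L where "L = (\<Inter>k. Ms k)"
  have LT: "L \<subseteq> T"
  proof
    fix x assume x: "x \<in> L"
    have "x \<in> (\<Union>j. C i j)" for i
    proof -
      obtain j where "Ms (Suc i) \<subseteq> C i j" using MsC by blast
      moreover have "x \<in> Ms (Suc i)" using x unfolding L_def by blast
      ultimately show ?thesis by blast
    qed
    then show "x \<in> T" unfolding T by blast
  qed
  have M1: "compactin Z (Ms (Suc 0))" using Ms(1)[of "Suc 0"] unfolding P_def by simp
  have Lc: "compactin Z L" unfolding L_def
    by (rule closed_compactin_Inter[OF M1]) (auto simp: Mscl)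
  have FLc: "compact (F ` L)"
  proof -
    have "compactin (subtopology Z T) L" using Lc LT by (simp add: compactin_subtopology)
    from image_compactin[OF this Fc] show ?thesis by simp
  qed
  then have FLb: "F ` L \<in> sets borel" by (simp add: borel_closed compact_imp_closed)
  have key: "\<exists>k. F ` (T \<inter> Ms k) \<subseteq> U" if U: "open U" "F ` L \<subseteq> U" for U
  proof (rule ccontr)
    assume H: "\<not> (\<exists>k. F ` (T \<inter> Ms k) \<subseteq> U)"
    have "\<exists>y. y \<in> T \<inter> Ms (Suc k) \<and> F y \<notin> U" for k
      using H by blast
    then obtain y where y: "\<And>k. y k \<in> T \<inter> Ms (Suc k)" "\<And>k. F (y k) \<notin> U" by metis
    define W where "W k = Z closure_of (T \<inter> Ms (Suc k) \<inter> {z. F z \<notin> U})" for k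
    have yW: "y k \<in> W i" if "i \<le> k" for i k
    proof -
      have "Ms (Suc k) \<subseteq> Ms (Suc i)" using decseqD[OF dec] that by simp
      then have "y k \<in> T \<inter> Ms (Suc i) \<inter> {z. F z \<notin> U}" using y[of k] by blast
      moreover have "T \<inter> Ms (Suc i) \<inter> {z. F z \<notin> U} \<subseteq> topspace Z" using TZ by blast
      ultimately show ?thesis unfolding W_def using closure_of_subset by blast
    qed
    have "Ms (Suc 0) \<inter> \<Inter>(range W) \<noteq> {}"
    proof -
      have fip: "Ms (Suc 0) \<inter> \<Inter>\<F> \<noteq> {}" if fin: "finite \<F>" and sub: "\<F> \<subseteq> range W" for \<F>
      proof -
        obtain K where K: "finite K" "\<F> = W ` K"
          using finite_subset_image[OF fin sub] by blast
        define k where "k = Max (insert 0 K)"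
        have "i \<le> k" if "i \<in> K" for i unfolding k_def using K(1) that by simp
        then have "y k \<in> \<Inter>\<F>" using yW K(2) by blast
        moreover have "y k \<in> Ms (Suc 0)"
          using y(1)[of k] decseqD[OF dec, of "Suc 0" "Suc k"] by auto
        ultimately show ?thesis by blast
      qed
      have cl: "\<forall>C\<in>range W. closedin Z C" unfolding W_def by simp
      have H2: "\<forall>\<U>. (\<forall>C\<in>\<U>. closedin Z C) \<and> (\<forall>\<F>. finite \<F> \<and> \<F> \<subseteq> \<U> \<longrightarrow> Ms (Suc 0) \<inter> \<Inter>\<F> \<noteq> {}) \<longrightarrow> Ms (Suc 0) \<inter> \<Inter>\<U> \<noteq> {}"
        using M1[unfolded compactin_fip] by (rule conjunct2)
      show ?thesis
      proof (rule H2[THEN spec, THEN mp], intro conjI allI impI)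
        show "\<forall>C\<in>range W. closedin Z C" by (rule cl)
        fix \<F> assume "finite \<F> \<and> \<F> \<subseteq> range W"
        then show "Ms (Suc 0) \<inter> \<Inter>\<F> \<noteq> {}" using fip by simp
      qed
    qed
    then obtain x where x1: "x \<in> Ms (Suc 0)" and xW: "\<And>k. x \<in> W k" by blast
    have "x \<in> Ms (Suc k)" for k
    proof -
      have "W k \<subseteq> Ms (Suc k)" unfolding W_def by (rule closure_of_minimal) (auto simp: Mscl)
      then show ?thesis using xW by blast
    qed
    moreover have "x \<in> Ms 0" using x1 decseqD[OF dec, of 0 "Suc 0"] by auto
    ultimately have "x \<in> Ms k" for k by (cases k) simp_all
    then have "x \<in> L" unfolding L_def by simp
    then have xT: "x \<in> T" and FxU: "F x \<in> U" using LT U(2) by blast+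
    have "openin (subtopology Z T) {z \<in> topspace (subtopology Z T). F z \<in> U}"
      by (rule openin_continuous_map_preimage[OF Fc]) (use U in simp)
    then obtain V where V: "openin Z V" "{z \<in> topspace (subtopology Z T). F z \<in> U} = V \<inter> T"
      unfolding openin_subtopology by blast
    have "x \<in> V" using V(2) xT FxU TZ by auto
    have "x \<in> Z closure_of (T \<inter> Ms (Suc 0) \<inter> {z. F z \<notin> U})" using xW[of 0] unfolding W_def .
    then have "\<forall>V. x \<in> V \<and> openin Z V \<longrightarrow> (\<exists>y. y \<in> T \<inter> Ms (Suc 0) \<inter> {z. F z \<notin> U} \<and> y \<in> V)"
      unfolding in_closure_of by (rule conjunct2)
    then obtain z where z: "z \<in> T \<inter> Ms (Suc 0) \<inter> {z. F z \<notin> U}" "z \<in> V"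
      using \<open>x \<in> V\<close> V(1) by blast
    then have "z \<in> V \<inter> T" by blast
    then have "F z \<in> U" using V(2) by blast
    then show False using z by blast
  qed
  have "r \<le> emeasure \<mu> (F ` L)"
  proof -
    have "r \<le> emeasure \<mu> U" if "U \<in> {U. open U \<and> F ` L \<subseteq> U}" for U
    proof -
      have "open U" "F ` L \<subseteq> U" using that by simp_all
      then obtain k where k: "F ` (T \<inter> Ms k) \<subseteq> U" using key by metis
      have Ub: "U \<in> sets \<mu>" using that sp by simp
      have "r < outer_measure_of \<mu> (F ` (T \<inter> Ms k))" using Ms(1)[of k] unfolding P_def by simp
      also have "\<dots> \<le> outer_measure_of \<mu> U" by (rule outer_measure_of_mono[OF k])
      also have "\<dots> = emeasure \<mu> U" using Ub by simp
      finally show ?thesis by simp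
    qed
    then have "r \<le> (INF U \<in> {U. open U \<and> F ` L \<subseteq> U}. emeasure \<mu> U)" by (rule INF_greatest)
    then show ?thesis using outer[OF FLb] by simp
  qed
  then show ?thesis by (intro exI[of _ L] conjI Lc LT)
qed

lemma inner_meas:
  fixes \<mu> :: "'a measure"
  assumes fm: "finite_measure \<mu>" and Asp: "A \<subseteq> space \<mu>"
    and inner: "\<And>r. r < outer_measure_of \<mu> A \<Longrightarrow> \<exists>C. C \<in> sets \<mu> \<and> C \<subseteq> A \<and> r \<le> emeasure \<mu> C"
  shows "A \<in> sets (completion \<mu>) \<and> emeasure (completion \<mu>) A = outer_measure_of \<mu> A"
proof -
  obtain E where E: "E \<in> sets \<mu>" "A \<subseteq> E" "outer_measure_of \<mu> A = emeasure \<mu> E"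
    using outer_measure_of_attain[OF Asp] by blast
  define SS where "SS = emeasure \<mu> ` {C. C \<in> sets \<mu> \<and> C \<subseteq> A}"
  have "{} \<in> {C. C \<in> sets \<mu> \<and> C \<subseteq> A}" by simp
  then have ne: "SS \<noteq> {}" unfolding SS_def by blast
  obtain f where f: "incseq f" "range f \<subseteq> SS" "Sup SS = (SUP i. f i)"
    using ennreal_Sup_countable_SUP[OF ne] by blast
  have "\<exists>C. C \<in> sets \<mu> \<and> C \<subseteq> A \<and> f i = emeasure \<mu> C" for i
  proof -
    have "f i \<in> SS" using f(2) by (rule range_subsetD)
    then obtain C where "C \<in> {C. C \<in> sets \<mu> \<and> C \<subseteq> A}" "f i = emeasure \<mu> C"
      unfolding SS_def by (rule imageE)
    then show ?thesis by blast
  qed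
  then obtain Cs where Cs: "\<And>i. Cs i \<in> sets \<mu>" "\<And>i. Cs i \<subseteq> A" "\<And>i. f i = emeasure \<mu> (Cs i)"
    by metis
  define Cu where "Cu = (\<Union>i. Cs i)"
  have "range Cs \<subseteq> sets \<mu>" using Cs(1) by blast
  then have Cu1: "Cu \<in> sets \<mu>" unfolding Cu_def by (rule sets.countable_UN)
  have Cu: "Cu \<in> sets \<mu>" "Cu \<subseteq> A" using Cu1 Cs(2) unfolding Cu_def by auto
  have "Sup SS \<le> emeasure \<mu> Cu" unfolding f(3)
  proof (rule SUP_least)
    fix i show "f i \<le> emeasure \<mu> Cu" unfolding Cs(3)
      by (rule emeasure_mono) (use Cu in \<open>auto simp: Cu_def\<close>)
  qed
  moreover have "outer_measure_of \<mu> A \<le> Sup SS"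
  proof (rule dense_le)
    fix x assume "x < outer_measure_of \<mu> A"
    then obtain C where C: "C \<in> sets \<mu>" "C \<subseteq> A" "x \<le> emeasure \<mu> C" using inner by blast
    have "emeasure \<mu> C \<in> SS" unfolding SS_def using C by blast
    then have "emeasure \<mu> C \<le> Sup SS" by (rule Sup_upper)
    then show "x \<le> Sup SS" using C(3) by simp
  qed
  moreover have "emeasure \<mu> Cu \<le> emeasure \<mu> E" using Cu E by (intro emeasure_mono) auto
  ultimately have eqCE: "emeasure \<mu> Cu = emeasure \<mu> E" using E(3) by simp
  have "emeasure \<mu> (E - Cu) = emeasure \<mu> E - emeasure \<mu> Cu"
    using Cu E finite_measure.emeasure_finite[OF fm] by (intro emeasure_Diff) auto
  moreover have "emeasure \<mu> E \<noteq> top" using finite_measure.emeasure_finite[OF fm] by simp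
  ultimately have "emeasure \<mu> (E - Cu) = 0" using eqCE by simp
  then have null: "E - Cu \<in> null_sets \<mu>" using Cu E by auto
  have Ac: "A \<in> sets (completion \<mu>)"
    by (rule sets_completionI[of A Cu "A - Cu" "E - Cu"]) (use Cu E null in auto)
  have "emeasure (completion \<mu>) Cu \<le> emeasure (completion \<mu>) A"
    using Ac Cu by (intro emeasure_mono) auto
  moreover have "emeasure (completion \<mu>) A \<le> emeasure (completion \<mu>) E"
    using Ac E by (intro emeasure_mono) auto
  moreover have "emeasure (completion \<mu>) Cu = emeasure \<mu> Cu" using Cu by simp
  moreover have "emeasure (completion \<mu>) E = emeasure \<mu> E" using E by simp
  ultimately have "emeasure (completion \<mu>) A = emeasure \<mu> E" using eqCE by simp
  then show ?thesis using Ac E(3) by simp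
qed

lemma prodT:
  fixes K' :: "nat \<Rightarrow> nat \<Rightarrow> 'b set" and N :: nat
  assumes mono: "\<And>i j j'. j \<le> j' \<Longrightarrow> K' i j \<subseteq> K' i j'"
  shows "PiE {..<N} (\<lambda>_. \<Inter>i. \<Union>j. K' i j) = (\<Inter>i. \<Union>j. PiE {..<N} (\<lambda>_. K' i j))"
proof
  show "PiE {..<N} (\<lambda>_. \<Inter>i. \<Union>j. K' i j) \<subseteq> (\<Inter>i. \<Union>j. PiE {..<N} (\<lambda>_. K' i j))"
  proof
    fix x assume x: "x \<in> PiE {..<N} (\<lambda>_. \<Inter>i. \<Union>j. K' i j)"
    show "x \<in> (\<Inter>i. \<Union>j. PiE {..<N} (\<lambda>_. K' i j))"
    proof
      fix i :: nat
      have "\<exists>j. x l \<in> K' i j" if "l < N" for l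
      proof -
        have "x l \<in> (\<Inter>i. \<Union>j. K' i j)" using PiE_mem[OF x] that by simp
        then show ?thesis by blast
      qed
      then obtain jl where jl: "\<And>l. l < N \<Longrightarrow> x l \<in> K' i (jl l)" by metis
      define J where "J = Max (insert 0 (jl ` {..<N}))"
      have "jl l \<le> J" if "l < N" for l unfolding J_def using that by (intro Max_ge) auto
      then have "x l \<in> K' i J" if "l < N" for l using jl[OF that] mono[of "jl l" J i] that by blast
      moreover have "x \<in> extensional {..<N}" using x by (simp add: PiE_iff)
      ultimately have "x \<in> PiE {..<N} (\<lambda>_. K' i J)" by (simp add: PiE_iff)
      then show "x \<in> (\<Union>j. PiE {..<N} (\<lambda>_. K' i j))" by blast
    qed
  qed
next
  show "(\<Inter>i. \<Union>j. PiE {..<N} (\<lambda>_. K' i j)) \<subseteq> PiE {..<N} (\<lambda>_. \<Inter>i. \<Union>j. K' i j)"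
  proof
    fix x assume x: "x \<in> (\<Inter>i. \<Union>j. PiE {..<N} (\<lambda>_. K' i j))"
    have xi: "\<exists>j. x \<in> PiE {..<N} (\<lambda>_. K' i j)" for i using x by blast
    then obtain j0 where "x \<in> PiE {..<N} (\<lambda>_. K' 0 j0)" by blast
    then have ext: "x \<in> extensional {..<N}" by (simp add: PiE_iff)
    have "x l \<in> (\<Inter>i. \<Union>j. K' i j)" if "l < N" for l
    proof -
      have "x l \<in> (\<Union>j. K' i j)" for i
      proof -
        obtain j where "x \<in> PiE {..<N} (\<lambda>_. K' i j)" using xi by blast
        then have "x l \<in> K' i j" using that by (simp add: PiE_iff)
        then show ?thesis by blast
      qed
      then show ?thesis by blast
    qed
    then show "x \<in> PiE {..<N} (\<lambda>_. \<Inter>i. \<Union>j. K' i j)" using ext by (simp add: PiE_iff)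
  qed
qed

lemma image_FT:
  assumes "f ` S = B"
  shows "(\<lambda>x. dsum m n (\<lambda>l. f (x l))) ` PiE {..<m+n} (\<lambda>_. S) = diffset m n B"
proof -
  have "(\<lambda>x. dsum m n (\<lambda>l. f (x l))) ` PiE {..<m+n} (\<lambda>_. S) = dsum m n ` PiE {..<m+n} (\<lambda>_. B)"
  proof
    show "(\<lambda>x. dsum m n (\<lambda>l. f (x l))) ` PiE {..<m+n} (\<lambda>_. S) \<subseteq> dsum m n ` PiE {..<m+n} (\<lambda>_. B)"
    proof
      fix z assume "z \<in> (\<lambda>x. dsum m n (\<lambda>l. f (x l))) ` PiE {..<m+n} (\<lambda>_. S)"
      then obtain x where x: "x \<in> PiE {..<m+n} (\<lambda>_. S)" and z: "z = dsum m n (\<lambda>l. f (x l))"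
        by (metis imageE)
      define w where "w = restrict (\<lambda>l. f (x l)) {..<m+n}"
      have "w \<in> PiE {..<m+n} (\<lambda>_. B)" unfolding w_def using x assms by (auto simp: PiE_iff)
      moreover have "z = dsum m n w" unfolding z w_def by (rule dsum_cong) simp
      ultimately show "z \<in> dsum m n ` PiE {..<m+n} (\<lambda>_. B)" by (metis image_eqI)
    qed
  next
    show "dsum m n ` PiE {..<m+n} (\<lambda>_. B) \<subseteq> (\<lambda>x. dsum m n (\<lambda>l. f (x l))) ` PiE {..<m+n} (\<lambda>_. S)"
    proof
      fix z assume "z \<in> dsum m n ` PiE {..<m+n} (\<lambda>_. B)"
      then obtain w where w: "w \<in> PiE {..<m+n} (\<lambda>_. B)" and z: "z = dsum m n w"
        by (metis imageE)
      have "\<exists>s. s \<in> S \<and> f s = w l" if "l < m+n" for l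
      proof -
        have "w l \<in> f ` S" using PiE_mem[OF w] that assms by simp
        then show ?thesis by (metis imageE)
      qed
      then obtain sl where sl: "\<And>l. l < m+n \<Longrightarrow> sl l \<in> S \<and> f (sl l) = w l" by metis
      define x where "x = restrict sl {..<m+n}"
      have "x \<in> PiE {..<m+n} (\<lambda>_. S)" unfolding x_def using sl by (auto simp: PiE_iff)
      moreover have "z = dsum m n (\<lambda>l. f (x l))" unfolding z x_def
        by (rule dsum_cong) (simp add: sl)
      ultimately show "z \<in> (\<lambda>x. dsum m n (\<lambda>l. f (x l))) ` PiE {..<m+n} (\<lambda>_. S)" by (metis image_eqI)
    qed
  qed
  then show ?thesis by (simp add: diffset_eq)
qed

theorem lemma4p3:
  fixes \<mu> :: "('a::{topological_ab_group_add, t2_space}) measure"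
    and B :: "'a set" and Y :: "'b topology" and m n :: nat
  assumes "compact (UNIV :: 'a set)"
    and "haar_prob \<mu>"
    and "K_analytic_via Y B"
  shows "diffset m n B \<in> sets (completion \<mu>) \<and>
         emeasure (completion \<mu>) (diffset m n B) =
           (SUP D \<in> {D. D \<subseteq> B \<and> compact D}. emeasure \<mu> (diffset m n D))"
proof -
  note H = assms(2)[unfolded haar_prob_def]
  have spU: "space \<mu> = UNIV" using H by (rule conjunct1)
  have sp: "sets \<mu> = sets borel" using H[THEN conjunct2] by (rule conjunct1)
  have ps: "prob_space \<mu>" using H[THEN conjunct2, THEN conjunct2] by (rule conjunct1)
  have outer0: "\<forall>A \<in> sets borel. emeasure \<mu> A = (INF U \<in> {U. open U \<and> A \<subseteq> U}. emeasure \<mu> U)"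
    using H[THEN conjunct2, THEN conjunct2, THEN conjunct2, THEN conjunct2] by (rule conjunct1)
  have outer: "\<And>A. A \<in> sets borel \<Longrightarrow> emeasure \<mu> A = (INF U \<in> {U. open U \<and> A \<subseteq> U}. emeasure \<mu> U)"
    using outer0 by (rule bspec)
  have fm: "finite_measure \<mu>" using ps by (rule prob_space.finite_measure)
  note H3 = assms(3)[unfolded K_analytic_via_def]
  have HY: "Hausdorff_space Y" using H3 by (rule conjunct1)
  have "\<exists>S f. Ksd_set Y S \<and> continuous_map (subtopology Y S) euclidean f \<and> f ` S = B"
    using H3 by (rule conjunct2)
  then obtain S f where KS: "Ksd_set Y S"
    and fc: "continuous_map (subtopology Y S) euclidean f" and fS: "f ` S = B"
    by (elim exE conjE)
  have "\<exists>K :: nat \<Rightarrow> nat \<Rightarrow> 'b set. (\<forall>i j. compactin Y (K i j)) \<and> S = (\<Inter>i. \<Union>j. K i j)"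
    using KS unfolding Ksd_set_def .
  then obtain K :: "nat \<Rightarrow> nat \<Rightarrow> 'b set" where Kc0: "\<forall>i j. compactin Y (K i j)" and SK: "S = (\<Inter>i. \<Union>j. K i j)"
    by (elim exE conjE)
  have Kc: "compactin Y (K i j)" for i j using Kc0 by simp
  define N where "N = m + n"
  define K' where "K' i j = \<Union>(K i ` {..j})" for i j :: nat
  have K'c: "compactin Y (K' i j)" for i j
    unfolding K'_def by (rule compactin_Union) (auto simp: Kc)
  have K'mono: "K' i j \<subseteq> K' i j'" if "j \<le> j'" for i j j'
    unfolding K'_def using that by (intro Union_mono image_mono) auto
  have SK': "S = (\<Inter>i. \<Union>j. K' i j)"
  proof -
    have "(\<Union>j. K' i j) = (\<Union>j. K i j)" for i unfolding K'_def by auto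
    then show ?thesis unfolding SK by simp
  qed
  define Z where "Z = product_topology (\<lambda>_. Y) {..<N}"
  define C where "C i j = PiE {..<N} (\<lambda>_. K' i j)" for i j
  define T where "T = PiE {..<N} (\<lambda>_. S)"
  define F where "F x = dsum m n (\<lambda>l. f (x l))" for x :: "nat \<Rightarrow> 'b"
  have HZ: "Hausdorff_space Z" unfolding Z_def
    by (simp add: Hausdorff_space_product_topology HY)
  have Cc: "compactin Z (C i j)" for i j unfolding Z_def C_def
    by (simp add: compactin_PiE K'c)
  have Cinc: "C i j \<subseteq> C i (Suc j)" for i j unfolding C_def
    by (rule PiE_mono) (rule K'mono, simp)
  have TC: "T = (\<Inter>i. \<Union>j. C i j)" unfolding T_def C_def SK'
    by (rule prodT) (rule K'mono)
  have proj: "continuous_map (subtopology Z T) euclidean (\<lambda>x. f (x l))" if "l < N" for l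
  proof -
    have "continuous_map Z Y (\<lambda>x. x l)" unfolding Z_def
      using continuous_map_product_projection[of l "{..<N}" "\<lambda>_. Y"] that by simp
    then have "continuous_map (subtopology Z T) Y (\<lambda>x. x l)"
      by (rule continuous_map_from_subtopology)
    moreover have "(\<lambda>x. x l) ` topspace (subtopology Z T) \<subseteq> S"
      using that unfolding T_def by (auto simp: PiE_iff)
    ultimately have "continuous_map (subtopology Z T) (subtopology Y S) (\<lambda>x. x l)"
      by (simp add: continuous_map_in_subtopology image_subset_iff_funcset)
    from continuous_map_compose[OF this fc] show ?thesis by (simp add: o_def)
  qed
  have Fc: "continuous_map (subtopology Z T) euclidean F" unfolding F_def
    by (rule cm_dsum) (rule proj, simp add: N_def)
  have FT: "F ` T = diffset m n B" unfolding F_def T_def N_def by (rule image_FT[OF fS])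
  have witness: "\<exists>D. D \<subseteq> B \<and> compact D \<and> r \<le> emeasure \<mu> (diffset m n D)"
    if r: "r < outer_measure_of \<mu> (diffset m n B)" for r
  proof -
    have "r < outer_measure_of \<mu> (F ` T)" using r FT by simp
    from capac[OF HZ Cc Cinc TC Fc sp outer this]
    obtain L where Lc: "compactin Z L" and LT: "L \<subseteq> T" and rL: "r \<le> emeasure \<mu> (F ` L)"
      by blast
    define D where "D = (\<Union>l\<in>{..<N}. (\<lambda>x. f (x l)) ` L)"
    have LcT: "compactin (subtopology Z T) L" using Lc LT by (simp add: compactin_subtopology)
    have "compact D" unfolding D_def
    proof (rule compact_UN)
      fix l assume "l \<in> {..<N}"
      then have "compactin euclidean ((\<lambda>x. f (x l)) ` L)"
        using image_compactin[OF LcT proj] by simp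
      then show "compact ((\<lambda>x. f (x l)) ` L)" by simp
    qed simp
    moreover have DB: "D \<subseteq> B"
    proof
      fix y assume "y \<in> D"
      then obtain l x where l: "l < N" and x: "x \<in> L" and y: "y = f (x l)" unfolding D_def by blast
      have "x l \<in> S" using LT x l unfolding T_def by (auto simp: PiE_iff)
      then show "y \<in> B" using fS y by blast
    qed
    moreover have "F ` L \<subseteq> diffset m n D"
    proof
      fix z assume "z \<in> F ` L"
      then obtain x where x: "x \<in> L" and z: "z = F x" by (metis imageE)
      define w where "w = restrict (\<lambda>l. f (x l)) {..<m+n}"
      have "w \<in> PiE {..<m+n} (\<lambda>_. D)" unfolding w_def D_def N_def using x by (auto simp: PiE_iff)
      moreover have "z = dsum m n w" unfolding z F_def w_def by (rule dsum_cong) simp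
      ultimately show "z \<in> diffset m n D" unfolding diffset_eq by (metis image_eqI)
    qed
    moreover have "diffset m n D \<in> sets \<mu>"
      using compact_diffset[OF \<open>compact D\<close>] sp by (simp add: borel_closed compact_imp_closed)
    ultimately have "emeasure \<mu> (F ` L) \<le> emeasure \<mu> (diffset m n D)"
      by (intro emeasure_mono) auto
    then show ?thesis using rL DB \<open>compact D\<close> by (intro exI[of _ D]) auto
  qed
  have dmono: "diffset m n D \<subseteq> diffset m n B" if "D \<subseteq> B" for D
    unfolding diffset_eq by (intro image_mono PiE_mono) (use that in auto)
  have Dsets: "diffset m n D \<in> sets \<mu>" if "compact D" for D
    using compact_diffset[OF that] sp by (simp add: borel_closed compact_imp_closed)
  have main: "diffset m n B \<in> sets (completion \<mu>) \<and>
      emeasure (completion \<mu>) (diffset m n B) = outer_measure_of \<mu> (diffset m n B)"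
  proof (rule inner_meas[OF fm])
    show "diffset m n B \<subseteq> space \<mu>" using spU by simp
  next
    fix r assume r: "r < outer_measure_of \<mu> (diffset m n B)"
    obtain D where D: "D \<subseteq> B" "compact D" "r \<le> emeasure \<mu> (diffset m n D)"
      using witness[OF r] by (elim exE conjE)
    show "\<exists>C. C \<in> sets \<mu> \<and> C \<subseteq> diffset m n B \<and> r \<le> emeasure \<mu> C"
      by (intro exI[of _ "diffset m n D"] conjI Dsets dmono D)
  qed
  have le1: "(SUP D \<in> {D. D \<subseteq> B \<and> compact D}. emeasure \<mu> (diffset m n D)) \<le> emeasure (completion \<mu>) (diffset m n B)"
  proof (rule SUP_least)
    fix D assume D: "D \<in> {D. D \<subseteq> B \<and> compact D}"
    have D2: "D \<subseteq> B" "compact D" using D by simp_all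
    have Ds: "diffset m n D \<in> sets \<mu>" by (rule Dsets[OF D2(2)])
    have "emeasure \<mu> (diffset m n D) = emeasure (completion \<mu>) (diffset m n D)" using Ds by simp
    also have "\<dots> \<le> emeasure (completion \<mu>) (diffset m n B)"
      by (rule emeasure_mono[OF dmono[OF D2(1)]]) (use main in simp)
    finally show "emeasure \<mu> (diffset m n D) \<le> emeasure (completion \<mu>) (diffset m n B)" .
  qed
  have le2: "outer_measure_of \<mu> (diffset m n B) \<le> (SUP D \<in> {D. D \<subseteq> B \<and> compact D}. emeasure \<mu> (diffset m n D))"
  proof (rule dense_le)
    fix r assume r: "r < outer_measure_of \<mu> (diffset m n B)"
    obtain D where D: "D \<subseteq> B" "compact D" "r \<le> emeasure \<mu> (diffset m n D)"
      using witness[OF r] by (elim exE conjE)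
    have "emeasure \<mu> (diffset m n D) \<le> (SUP D \<in> {D. D \<subseteq> B \<and> compact D}. emeasure \<mu> (diffset m n D))"
      by (rule SUP_upper) (use D in simp)
    then show "r \<le> (SUP D \<in> {D. D \<subseteq> B \<and> compact D}. emeasure \<mu> (diffset m n D))" using D(3) by simp
  qed
  have "emeasure (completion \<mu>) (diffset m n B) = (SUP D \<in> {D. D \<subseteq> B \<and> compact D}. emeasure \<mu> (diffset m n D))"
    using main le1 le2 by (metis antisym)
  then show ?thesis by (rule conjI[OF conjunct1[OF main]])
qed

end
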